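(* A map $M=(C_M,v_M,f_M)$ is orientable if and only if the $a$-map $M^a=(a_M\circ v_M,v_M,f_M)$ is orientable.
   Context: A map is a triple $M=(C_M,v_M,f_M)$ where $C_M$ is a finite cubic graph and $v_M,f_M$ are disjoint perfect matchings whose union is a disjoint union of 4-cycles; $a_M$ is the third perfect matching; each matching is viewed as a fixed-point-free involution on $V(C_M)$. $M$ is orientable if $C_M$ is bipartite. An $a$-map $A=(R,\Theta,\Phi)$ on a finite set $B$ is a triple of permutations with $\Theta\Phi=\Phi\Theta$, $\Theta^2=\Phi^2=\mathrm{id}$, $x,\Theta x,\Phi x,\Theta\Phi x$ distinct for all $x$, $R\Theta=\Theta R^{-1}$, and $R^n(x)\ne\Theta x$ for all integers $n$ and all $x$. $A$ is non-orientable if for some orbit of the group $\langle R,\Theta,\Phi\rangle$ the group $\langle R,\Theta\Phi\rangle$ acts transitively on that orbit; otherwise $A$ is orientable. *)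

theory Defs
  imports Main
begin

definition perfect_matching :: "'a set \<Rightarrow> ('a \<Rightarrow> 'a \<Rightarrow> bool) \<Rightarrow> ('a \<Rightarrow> 'a) \<Rightarrow> bool" where
  "perfect_matching V E m \<longleftrightarrow>
     (\<forall>x\<in>V. m x \<in> V \<and> m x \<noteq> x \<and> m (m x) = x \<and> E x (m x))"

definition finite_cubic_graph :: "'a set \<Rightarrow> ('a \<Rightarrow> 'a \<Rightarrow> bool) \<Rightarrow> bool" where
  "finite_cubic_graph V E \<longleftrightarrow> finite V \<and>
     (\<forall>x y. E x y \<longrightarrow> x \<in> V \<and> y \<in> V \<and> x \<noteq> y \<and> E y x) \<and>
     (\<forall>x\<in>V. card {y. E x y} = 3)"

text \<open>A map M = (C_M, v_M, f_M): v, f disjoint perfect matchings whose union is a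
  disjoint union of 4-cycles (equivalently, v f = f v, the cycles being x, v x, f v x, v f v x).\<close>
definition is_map :: "'a set \<Rightarrow> ('a \<Rightarrow> 'a \<Rightarrow> bool) \<Rightarrow> ('a \<Rightarrow> 'a) \<Rightarrow> ('a \<Rightarrow> 'a) \<Rightarrow> bool" where
  "is_map V E v f \<longleftrightarrow> finite_cubic_graph V E \<and>
     perfect_matching V E v \<and> perfect_matching V E f \<and>
     (\<forall>x\<in>V. v x \<noteq> f x) \<and>
     (\<forall>x\<in>V. v (f x) = f (v x))"

definition amatch :: "('a \<Rightarrow> 'a \<Rightarrow> bool) \<Rightarrow> ('a \<Rightarrow> 'a) \<Rightarrow> ('a \<Rightarrow> 'a) \<Rightarrow> 'a \<Rightarrow> 'a" where
  "amatch E v f x = (THE y. E x y \<and> y \<noteq> v x \<and> y \<noteq> f x)"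

text \<open>A map is orientable iff its graph is bipartite.\<close>
definition bipartite :: "'a set \<Rightarrow> ('a \<Rightarrow> 'a \<Rightarrow> bool) \<Rightarrow> bool" where
  "bipartite V E \<longleftrightarrow> (\<exists>c :: 'a \<Rightarrow> bool. \<forall>x\<in>V. \<forall>y\<in>V. E x y \<longrightarrow> c x \<noteq> c y)"

definition map_orientable :: "'a set \<Rightarrow> ('a \<Rightarrow> 'a \<Rightarrow> bool) \<Rightarrow> ('a \<Rightarrow> 'a) \<Rightarrow> ('a \<Rightarrow> 'a) \<Rightarrow> bool" where
  "map_orientable V E v f \<longleftrightarrow> bipartite V E"

text \<open>Orbit of x under the group generated by the permutations in gens (acting on B):
  reachability by applying generators and their inverses.\<close>
definition gen_step :: "'a set \<Rightarrow> ('a \<Rightarrow> 'a) set \<Rightarrow> ('a \<times> 'a) set" where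
  "gen_step B gens = {(y, g y) | y g. y \<in> B \<and> g \<in> gens} \<union> {(g y, y) | y g. y \<in> B \<and> g \<in> gens}"

definition gen_orbit :: "'a set \<Rightarrow> ('a \<Rightarrow> 'a) set \<Rightarrow> 'a \<Rightarrow> 'a set" where
  "gen_orbit B gens x = {y. (x, y) \<in> (gen_step B gens)\<^sup>*}"

definition amap_nonorientable :: "'a set \<Rightarrow> ('a \<Rightarrow> 'a) \<Rightarrow> ('a \<Rightarrow> 'a) \<Rightarrow> ('a \<Rightarrow> 'a) \<Rightarrow> bool" where
  "amap_nonorientable B R \<Theta> \<Phi> \<longleftrightarrow>
     (\<exists>x\<in>B. \<forall>y\<in>gen_orbit B {R, \<Theta>, \<Phi>} x. \<forall>z\<in>gen_orbit B {R, \<Theta>, \<Phi>} x.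
         z \<in> gen_orbit B {R, \<Theta> \<circ> \<Phi>} y)"

definition amap_orientable :: "'a set \<Rightarrow> ('a \<Rightarrow> 'a) \<Rightarrow> ('a \<Rightarrow> 'a) \<Rightarrow> ('a \<Rightarrow> 'a) \<Rightarrow> bool" where
  "amap_orientable B R \<Theta> \<Phi> \<longleftrightarrow> \<not> amap_nonorientable B R \<Theta> \<Phi>"

end

theory Submission
  imports Defs
begin

lemma amatch_props:
  assumes M: "is_map V E v f" and x: "x \<in> V"
  shows "amatch E v f x \<in> V \<and> E x (amatch E v f x) \<and> amatch E v f x \<noteq> v x
     \<and> amatch E v f x \<noteq> f x \<and> (\<forall>y. E x y \<longrightarrow> y = v x \<or> y = f x \<or> y = amatch E v f x)"
proof -
  from M have G: "finite_cubic_graph V E" and pv: "perfect_matching V E v"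
    and pf: "perfect_matching V E f" and vf: "v x \<noteq> f x"
    using x unfolding is_map_def by auto
  let ?S = "{y. E x y}"
  have sub: "?S \<subseteq> V" using G unfolding finite_cubic_graph_def by auto
  have fin: "finite ?S" using G sub finite_subset unfolding finite_cubic_graph_def by blast
  have c3: "card ?S = 3" using G x unfolding finite_cubic_graph_def by auto
  have inv: "v x \<in> ?S" "f x \<in> ?S" using pv pf x unfolding perfect_matching_def by auto
  have "card (?S - {v x, f x}) = 1"
    using c3 inv vf fin by (simp add: card_Diff_subset)
  then obtain r where r: "?S - {v x, f x} = {r}" by (auto simp: card_Suc_eq)
  have rp: "E x r" "r \<noteq> v x" "r \<noteq> f x" using r by auto
  have uniq: "\<And>y. E x y \<Longrightarrow> y \<noteq> v x \<Longrightarrow> y \<noteq> f x \<Longrightarrow> y = r" using r by blast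
  have am: "amatch E v f x = r"
    unfolding amatch_def proof (rule the_equality)
    show "E x r \<and> r \<noteq> v x \<and> r \<noteq> f x" using rp by simp
  next
    fix y assume "E x y \<and> y \<noteq> v x \<and> y \<noteq> f x"
    then show "y = r" using uniq by simp
  qed
  have "r \<in> V" using rp sub by auto
  then show ?thesis unfolding am using rp uniq by blast
qed

lemma amatch_inv:
  assumes M: "is_map V E v f" and x: "x \<in> V"
  shows "amatch E v f (amatch E v f x) = x"
proof -
  let ?a = "amatch E v f"
  have A: "?a x \<in> V" "E x (?a x)" "?a x \<noteq> v x" "?a x \<noteq> f x" using amatch_props[OF M x] by auto
  have B: "\<forall>y. E (?a x) y \<longrightarrow> y = v (?a x) \<or> y = f (?a x) \<or> y = ?a (?a x)"
    using amatch_props[OF M A(1)] by auto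
  have sym: "E (?a x) x" using M A(2) unfolding is_map_def finite_cubic_graph_def by auto
  have pv: "perfect_matching V E v" and pf: "perfect_matching V E f" using M unfolding is_map_def by auto
  have vv: "v (v (?a x)) = ?a x" using pv A(1) unfolding perfect_matching_def by blast
  have ff: "f (f (?a x)) = ?a x" using pf A(1) unfolding perfect_matching_def by blast
  have "x \<noteq> v (?a x)" using vv A(3) by auto
  moreover have "x \<noteq> f (?a x)" using ff A(4) by auto
  moreover have "x = v (?a x) \<or> x = f (?a x) \<or> x = ?a (?a x)" using B sym by blast
  ultimately show ?thesis by auto
qed

lemma gen_step_sym: "sym (gen_step B gens)"
  unfolding gen_step_def sym_def by blast

lemma gen_stepI: "y \<in> B \<Longrightarrow> g \<in> gens \<Longrightarrow> (y, g y) \<in> gen_step B gens"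
  unfolding gen_step_def by blast

lemma gen_step_symI: "(x, y) \<in> gen_step B gens \<Longrightarrow> (y, x) \<in> gen_step B gens"
  using gen_step_sym by (rule symD)

context
  fixes V :: "'a set" and E :: "'a \<Rightarrow> 'a \<Rightarrow> bool" and v f :: "'a \<Rightarrow> 'a"
  assumes M: "is_map V E v f"
begin

abbreviation "aa \<equiv> amatch E v f"
abbreviation "RR \<equiv> amatch E v f \<circ> v"
abbreviation "S1 \<equiv> gen_step V {RR, v, f}"
abbreviation "S2 \<equiv> gen_step V {RR, v \<circ> f}"
abbreviation "Q \<equiv> S2\<^sup>*"

lemma bas:
  assumes x: "x \<in> V"
  shows "v x \<in> V" "f x \<in> V" "aa x \<in> V" "v (v x) = x" "f (f x) = x" "aa (aa x) = x"
    "v (f x) = f (v x)" "E x (v x)" "E x (f x)" "E x (aa x)"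
    "\<And>y. E x y \<Longrightarrow> y = v x \<or> y = f x \<or> y = aa x"
  using M x amatch_props[OF M x] amatch_inv[OF M x] unfolding is_map_def perfect_matching_def
  by auto

lemma Esym: "E x y \<Longrightarrow> x \<in> V \<and> y \<in> V \<and> E y x"
  using M unfolding is_map_def finite_cubic_graph_def by blast

lemma S2V: "(x, y) \<in> S2 \<Longrightarrow> x \<in> V \<and> y \<in> V"
  unfolding gen_step_def using bas by auto

lemma S1V: "(x, y) \<in> S1 \<Longrightarrow> x \<in> V \<and> y \<in> V"
  unfolding gen_step_def using bas by auto

lemma QV: "(x, y) \<in> Q \<Longrightarrow> x \<in> V \<Longrightarrow> y \<in> V"
  by (induction rule: rtrancl_induct) (auto dest: S2V)

lemma Qsym: "(x, y) \<in> Q \<Longrightarrow> (y, x) \<in> Q"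
  by (meson gen_step_sym sym_rtrancl symD)

lemma Qtrans: "(x, y) \<in> Q \<Longrightarrow> (y, z) \<in> Q \<Longrightarrow> (x, z) \<in> Q"
  by (rule rtrancl_trans)

lemma S2R: "y \<in> V \<Longrightarrow> (y, aa (v y)) \<in> S2"
  unfolding gen_step_def by force

lemma S2vf: "y \<in> V \<Longrightarrow> (y, v (f y)) \<in> S2"
  unfolding gen_step_def by force

lemma S2v: "(y, w) \<in> S2 \<Longrightarrow> (v y, v w) \<in> S2"
proof -
  assume "(y, w) \<in> S2"
  then consider (R1) "y \<in> V" "w = aa (v y)" | (F1) "y \<in> V" "w = v (f y)"
    | (R2) "w \<in> V" "y = aa (v w)" | (F2) "w \<in> V" "y = v (f w)"
    unfolding gen_step_def by auto
  then show ?thesis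
  proof cases
    case R1
    have vy: "v y \<in> V" using bas(1)[OF R1(1)] .
    have w: "w \<in> V" using bas(3)[OF vy] R1(2) by simp
    have u: "v w \<in> V" using bas(1)[OF w] .
    have "aa (v (v w)) = aa w" using bas(4)[OF w] by simp
    also have "\<dots> = v y" using R1(2) bas(6)[OF vy] by simp
    finally have e: "aa (v (v w)) = v y" .
    have "(v w, aa (v (v w))) \<in> S2" using S2R[OF u] .
    then have "(aa (v (v w)), v w) \<in> S2" by (rule gen_step_symI)
    then show ?thesis using e by simp
  next
    case F1
    have vy: "v y \<in> V" using bas(1)[OF F1(1)] .
    have fy: "f y \<in> V" using bas(2)[OF F1(1)] .
    have "v w = f y" using F1(2) bas(4)[OF fy] by simp
    moreover have "v (f (v y)) = f y"
      using bas(7)[OF vy] bas(4)[OF F1(1)] by simp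
    ultimately show ?thesis using S2vf[OF vy] by simp
  next
    case R2
    have vw: "v w \<in> V" using bas(1)[OF R2(1)] .
    have y: "y \<in> V" using bas(3)[OF vw] R2(2) by simp
    have u: "v y \<in> V" using bas(1)[OF y] .
    have "aa (v (v y)) = aa y" using bas(4)[OF y] by simp
    also have "\<dots> = v w" using R2(2) bas(6)[OF vw] by simp
    finally have e: "aa (v (v y)) = v w" .
    show ?thesis using S2R[OF u] e by simp
  next
    case F2
    have vw: "v w \<in> V" using bas(1)[OF F2(1)] .
    have fw: "f w \<in> V" using bas(2)[OF F2(1)] .
    have "v y = f w" using F2(2) bas(4)[OF fw] by simp
    moreover have "v (f (v w)) = f w"
      using bas(7)[OF vw] bas(4)[OF F2(1)] by simp
    ultimately have "(v w, v y) \<in> S2" using S2vf[OF vw] by simp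
    then show ?thesis by (rule gen_step_symI)
  qed
qed

lemma Qv: "(y, w) \<in> Q \<Longrightarrow> (v y, v w) \<in> Q"
proof (induction rule: rtrancl_induct)
  case base then show ?case by simp
next
  case (step y z)
  show ?case by (rule rtrancl_into_rtrancl[OF step.IH S2v[OF step.hyps(2)]])
qed

lemma K: "E p q \<Longrightarrow> (v p, q) \<in> Q"
proof -
  assume e: "E p q"
  then have p: "p \<in> V" using Esym by blast
  then consider "q = v p" | "q = f p" | "q = aa p" using bas(11) e by blast
  then show ?thesis
  proof cases
    case 1 then show ?thesis by simp
  next
    case 2
    have "v (f (v p)) = f p" using p bas by auto
    then show ?thesis using S2vf[of "v p"] p bas 2 by auto
  next
    case 3
    have "aa (v (v p)) = aa p" using p bas by auto
    then show ?thesis using S2R[of "v p"] p bas 3 by auto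
  qed
qed

lemma step1: "(z, z') \<in> S1 \<Longrightarrow> (z, z') \<in> Q \<or> (v z, z') \<in> Q"
proof -
  assume "(z, z') \<in> S1"
  then consider "z \<in> V" "z' = aa (v z)" | "z \<in> V" "z' = v z" | "z \<in> V" "z' = f z"
    | "z' \<in> V" "z = aa (v z')" | "z' \<in> V" "z = v z'" | "z' \<in> V" "z = f z'"
    unfolding gen_step_def by auto
  then show ?thesis
  proof cases
    case 1 then show ?thesis using S2R by auto
  next
    case 2 then show ?thesis using K bas by auto
  next
    case 3 then show ?thesis using K bas by auto
  next
    case 4 then show ?thesis using S2R[of z'] Qsym by auto
  next
    case 5 then show ?thesis using bas by auto
  next
    case 6
    have "E z' z" using bas(9)[OF 6(1)] 6(2) by simp
    then have "E z z'" using Esym by blast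
    then show ?thesis using K by blast
  qed
qed

lemma inv1: "(p, z) \<in> S1\<^sup>* \<Longrightarrow> p \<in> V \<Longrightarrow> (z, p) \<in> Q \<or> (z, v p) \<in> Q"
proof (induction rule: rtrancl_induct)
  case base then show ?case by simp
next
  case (step z z')
  have st: "(z', z) \<in> Q \<or> (z', v z) \<in> Q" using step1[OF step(2)] Qsym by blast
  from step have ih: "(z, p) \<in> Q \<or> (z, v p) \<in> Q" by blast
  then show ?case
  proof
    assume zp: "(z, p) \<in> Q"
    then have "(v z, v p) \<in> Q" by (rule Qv)
    then show ?case using st zp Qtrans by blast
  next
    assume zp: "(z, v p) \<in> Q"
    then have "(v z, v (v p)) \<in> Q" by (rule Qv)
    then have "(v z, p) \<in> Q" using bas step by simp
    then show ?case using st zp Qtrans by blast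
  qed
qed

lemma S1sym: "(x, y) \<in> S1\<^sup>* \<Longrightarrow> (y, x) \<in> S1\<^sup>*"
  by (meson gen_step_sym sym_rtrancl symD)

lemma E_S1: "E p q \<Longrightarrow> (p, q) \<in> S1\<^sup>*"
proof -
  assume e: "E p q"
  then have p: "p \<in> V" using Esym by blast
  have s1: "(p, v p) \<in> S1" "(p, f p) \<in> S1" using gen_stepI[OF p] by auto
  have s2: "(v p, RR (v p)) \<in> S1" by (rule gen_stepI[OF bas(1)[OF p]]) (rule insertI1)
  then have s3: "(v p, aa p) \<in> S1" using bas(4)[OF p] by simp
  consider "q = v p" | "q = f p" | "q = aa p" using bas(11) p e by blast
  then show ?thesis using s1 s3 by cases auto
qed

lemma dir1:
  assumes b: "bipartite V E" shows "\<not> amap_nonorientable V RR v f"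
proof
  obtain c :: "'a \<Rightarrow> bool" where c: "\<forall>x\<in>V. \<forall>y\<in>V. E x y \<longrightarrow> c x \<noteq> c y" using b unfolding bipartite_def by blast
  have cE: "\<And>x y. E x y \<Longrightarrow> c x \<noteq> c y" using c Esym by blast
  have cS: "(x, z) \<in> S2 \<Longrightarrow> c z = c x" for x z
  proof -
    assume "(x, z) \<in> S2"
    then consider "x \<in> V" "z = aa (v x)" | "x \<in> V" "z = v (f x)"
      | "z \<in> V" "x = aa (v z)" | "z \<in> V" "x = v (f z)"
      unfolding gen_step_def by auto
    then show ?thesis
    proof cases
      case 1
      then have "c x \<noteq> c (v x)" "c (v x) \<noteq> c z" using cE bas by auto
      then show ?thesis by auto
    next
      case 2
      have "c x \<noteq> c (f x)" using cE[OF bas(9)[OF 2(1)]] .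
      moreover have "c (f x) \<noteq> c (v (f x))" using cE[OF bas(8)[OF bas(2)[OF 2(1)]]] .
      ultimately show ?thesis using 2(2) by auto
    next
      case 3
      then have "c z \<noteq> c (v z)" "c (v z) \<noteq> c x" using cE bas by auto
      then show ?thesis by auto
    next
      case 4
      have "c z \<noteq> c (f z)" using cE[OF bas(9)[OF 4(1)]] .
      moreover have "c (f z) \<noteq> c (v (f z))" using cE[OF bas(8)[OF bas(2)[OF 4(1)]]] .
      ultimately show ?thesis using 4(2) by auto
    qed
  qed
  have cQ: "(x, z) \<in> Q \<Longrightarrow> c z = c x" for x z
    by (induction rule: rtrancl_induct) (auto dest: cS)
  assume "amap_nonorientable V RR v f"
  then obtain x where x: "x \<in> V" and tr: "\<forall>y\<in>gen_orbit V {RR, v, f} x. \<forall>z\<in>gen_orbit V {RR, v, f} x.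
         z \<in> gen_orbit V {RR, v \<circ> f} y" unfolding amap_nonorientable_def by blast
  have "x \<in> gen_orbit V {RR, v, f} x" unfolding gen_orbit_def by simp
  moreover have "(x, v x) \<in> S1" using x unfolding gen_step_def by force
  then have "v x \<in> gen_orbit V {RR, v, f} x" unfolding gen_orbit_def by auto
  ultimately have "v x \<in> gen_orbit V {RR, v \<circ> f} x" using tr by blast
  then have "(x, v x) \<in> Q" unfolding gen_orbit_def by simp
  then have "c (v x) = c x" by (rule cQ)
  moreover have "c x \<noteq> c (v x)" using cE bas x by auto
  ultimately show False by simp
qed

lemma dir2:
  assumes n: "\<not> amap_nonorientable V RR v f" shows "bipartite V E"
proof -
  have nv: "(p, v p) \<notin> Q" if p: "p \<in> V" for p
  proof
    assume pv: "(p, v p) \<in> Q"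
    have all: "(y, p) \<in> Q" if "(p, y) \<in> S1\<^sup>*" for y
      using inv1[OF that p] pv Qsym Qtrans by blast
    have "\<forall>y\<in>gen_orbit V {RR, v, f} p. \<forall>z\<in>gen_orbit V {RR, v, f} p.
         z \<in> gen_orbit V {RR, v \<circ> f} y"
      unfolding gen_orbit_def using all Qsym Qtrans by blast
    then show False using n p unfolding amap_nonorientable_def by blast
  qed
  define c where "c y = (((SOME r. (y, r) \<in> S1\<^sup>*), y) \<in> Q)" for y
  have "c p \<noteq> c q" if e: "E p q" for p q
  proof -
    have p: "p \<in> V" and q: "q \<in> V" using e Esym by auto
    have pq: "(p, q) \<in> S1\<^sup>*" "(q, p) \<in> S1\<^sup>*" using E_S1 e S1sym by auto
    have same: "(p, r) \<in> S1\<^sup>* \<longleftrightarrow> (q, r) \<in> S1\<^sup>*" for r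
      using pq rtrancl_trans[of p q _ r] rtrancl_trans[of q p _ r] by blast
    define r where "r = (SOME r. (p, r) \<in> S1\<^sup>*)"
    have rq: "r = (SOME r. (q, r) \<in> S1\<^sup>*)" unfolding r_def using same by simp
    have pr: "(p, r) \<in> S1\<^sup>*" unfolding r_def by (rule someI[of _ p]) simp
    have cp: "c p = ((r, p) \<in> Q)" unfolding c_def r_def by simp
    have cq: "c q = ((r, q) \<in> Q)" unfolding c_def using rq by simp
    have I: "(r, p) \<in> Q \<or> (r, v p) \<in> Q" using inv1[OF pr p] .
    have Kq: "(v p, q) \<in> Q" using K e .
    have npv: "(p, v p) \<notin> Q" using nv p .
    show ?thesis
    proof
      assume eq: "c p = c q"
      show False
      proof (cases "(r, p) \<in> Q")
        case True
        then have "(r, q) \<in> Q" using eq cp cq by simp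
        then have "(p, v p) \<in> Q" using True Kq Qsym Qtrans by blast
        then show False using npv by simp
      next
        case False
        then have rv: "(r, v p) \<in> Q" using I by simp
        have "(r, q) \<notin> Q" using eq cp cq False by simp
        then show False using rv Kq Qtrans by blast
      qed
    qed
  qed
  then show ?thesis unfolding bipartite_def by blast
qed

end

theorem proposition1p2:
  fixes V :: "'a set" and E :: "'a \<Rightarrow> 'a \<Rightarrow> bool" and v f :: "'a \<Rightarrow> 'a"
  assumes "is_map V E v f"
  shows "map_orientable V E v f \<longleftrightarrow> amap_orientable V (amatch E v f \<circ> v) v f"
  unfolding map_orientable_def amap_orientable_def
  using dir1[OF assms] dir2[OF assms] by blast

end
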